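(* Let $0<\sigma<2$ and let $p(\zeta)=(|\zeta|^2+|\zeta|^{2-\sigma})^{1/2}$ for $\zeta\in\mathbb{R}^3$. Let $a,b,c\in\mathbb{R}^3$ with $a=b+c$ and $|c|\le\min\{|a|,|b|\}$. If $|b|\ge1$, then \[ |p(a)-p(b)-p(c)|\gtrsim \frac{|c|}{1+(|a||c|)^\sigma}+|c|\big(1-\cos[a,c]+1-\cos[a,b]\big). \] Moreover, if $|c|<1$, then \[ |p(a)-p(b)-p(c)|\gtrsim\frac{|c|^{(2-\sigma)/2}}{(1+|b|^\sigma)^{1/2}} . \]
   Context: $[x,y]$ denotes the angle between vectors $x,y\in\mathbb{R}^3$. Implicit constants depend only on $\sigma$. *)

theory Defs
  imports "HOL-Analysis.Analysis"
begin

text \<open>Angle between two vectors (convention: arccos of the normalized inner product;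
  for a zero vector the quotient is 0 in Isabelle, giving angle pi/2).\<close>
definition vangle :: "real^3 \<Rightarrow> real^3 \<Rightarrow> real" where
  "vangle x y = arccos (inner x y / (norm x * norm y))"

definition psym :: "real \<Rightarrow> real^3 \<Rightarrow> real" where
  "psym \<sigma> \<zeta> = sqrt ((norm \<zeta>)\<^sup>2 + norm \<zeta> powr (2 - \<sigma>))"

end

theory Submission imports Defs begin
definition Fr :: "real \<Rightarrow> real \<Rightarrow> real" where
  "Fr \<sigma> r = sqrt (r\<^sup>2 + r powr (2 - \<sigma>))"

lemma Fr_mono:
  assumes "\<sigma> < 2" "0 \<le> s" "s \<le> t"
  shows "Fr \<sigma> s \<le> Fr \<sigma> t"
proof -
  have "s powr (2-\<sigma>) \<le> t powr (2-\<sigma>)" using assms by (intro powr_mono2) auto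
  moreover have "s\<^sup>2 \<le> t\<^sup>2" using assms by (intro power_mono) auto
  ultimately show ?thesis unfolding Fr_def by (intro real_sqrt_le_mono) linarith
qed

lemma Fr_diff:
  assumes "0 < \<sigma>" "\<sigma> < 2" "0 \<le> s" "s \<le> t" "1 \<le> t"
  shows "(t - s) / 4 \<le> Fr \<sigma> t - Fr \<sigma> s"
proof -
  define A where "A = Fr \<sigma> t"
  define B where "B = Fr \<sigma> s"
  have BA: "B \<le> A" unfolding A_def B_def using Fr_mono assms by auto
  have B0: "0 \<le> B" unfolding B_def Fr_def by simp
  have p: "s powr (2-\<sigma>) \<le> t powr (2-\<sigma>)" using assms by (intro powr_mono2) auto
  have A2: "A\<^sup>2 = t\<^sup>2 + t powr (2 - \<sigma>)" unfolding A_def Fr_def by simp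
  have B2: "B\<^sup>2 = s\<^sup>2 + s powr (2 - \<sigma>)" unfolding B_def Fr_def using assms by simp
  have tp: "t powr (2-\<sigma>) \<le> t powr 2" using assms by (intro powr_mono) auto
  also have "t powr 2 = t\<^sup>2" using assms by (simp add: powr_numeral)
  finally have "t powr (2 - \<sigma>) \<le> t\<^sup>2" .
  moreover have "(2*t)\<^sup>2 = 4*t\<^sup>2" by (simp add: power2_eq_square)
  moreover have "0 \<le> t\<^sup>2" by simp
  ultimately have "t\<^sup>2 + t powr (2 - \<sigma>) \<le> (2*t)\<^sup>2" by linarith
  hence A2t: "A \<le> 2*t" unfolding A_def Fr_def using assms by (intro real_le_lsqrt) auto
  have key: "(A - B) * (A + B) \<ge> (t - s) * t"
  proof -
    have "(A - B) * (A + B) = A\<^sup>2 - B\<^sup>2" by (simp add: power2_eq_square algebra_simps)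
    also have "\<dots> \<ge> t\<^sup>2 - s\<^sup>2" using A2 B2 p by linarith
    moreover have "t\<^sup>2 - s\<^sup>2 = (t - s) * (t + s)" by (simp add: power2_eq_square algebra_simps)
    moreover have "(t - s) * t \<le> (t - s) * (t + s)" using assms by (intro mult_left_mono) auto
    ultimately show ?thesis by linarith
  qed
  have "(A - B) * (A + B) \<le> (A - B) * (4 * t)" using BA B0 A2t by (intro mult_left_mono) auto
  hence "(t - s) * t \<le> ((A - B) * 4) * t" using key by (simp add: algebra_simps)
  hence "t - s \<le> (A - B) * 4" using assms by (simp add: mult_le_cancel_right)
  thus ?thesis unfolding A_def B_def by simp
qed

definition Gr :: "real \<Rightarrow> real \<Rightarrow> real" where
  "Gr \<sigma> r = sqrt (1 + r powr (-\<sigma>))"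

lemma Fr_Gr: assumes "0 < r" shows "Fr \<sigma> r = r * Gr \<sigma> r"
proof -
  have "r powr (2 + (-\<sigma>)) = r powr 2 * r powr (-\<sigma>)" by (rule powr_add)
  moreover have "r powr 2 = r\<^sup>2" using assms by (intro powr_numeral) simp
  ultimately have "r powr (2 - \<sigma>) = r\<^sup>2 * r powr (-\<sigma>)" by simp
  hence "r\<^sup>2 + r powr (2 - \<sigma>) = r\<^sup>2 * (1 + r powr (-\<sigma>))" by (simp add: algebra_simps)
  hence "Fr \<sigma> r = sqrt (r\<^sup>2) * sqrt (1 + r powr (-\<sigma>))" unfolding Fr_def by (simp only: real_sqrt_mult)
  thus ?thesis unfolding Gr_def using assms by simp
qed
lemma Gr_anti: assumes "0 < \<sigma>" "0 < u" "u \<le> v" shows "Gr \<sigma> v \<le> Gr \<sigma> u"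
proof -
  have "v powr (-\<sigma>) \<le> u powr (-\<sigma>)" using assms by (intro powr_mono2') auto
  thus ?thesis unfolding Gr_def by (intro real_sqrt_le_mono) linarith
qed

lemma Egap:
  assumes "0 < \<sigma>" "0 < y" "y \<le> x"
  shows "y * y powr (-\<sigma>) * (1 - 2 powr (-\<sigma>)) / (2 * Gr \<sigma> y) \<le> Fr \<sigma> x + Fr \<sigma> y - Fr \<sigma> (x + y)"
proof -
  have x0: "0 < x" using assms by linarith
  have e: "Fr \<sigma> x + Fr \<sigma> y - Fr \<sigma> (x + y) = x * (Gr \<sigma> x - Gr \<sigma> (x+y)) + y * (Gr \<sigma> y - Gr \<sigma> (x+y))"
  proof -
    have "Fr \<sigma> x = x * Gr \<sigma> x" using x0 by (rule Fr_Gr)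
    moreover have "Fr \<sigma> y = y * Gr \<sigma> y" using assms by (intro Fr_Gr) 
    moreover have "Fr \<sigma> (x+y) = (x+y) * Gr \<sigma> (x+y)" using assms x0 by (intro Fr_Gr) simp
    ultimately show ?thesis by (simp add: algebra_simps)
  qed
  have "Gr \<sigma> (x+y) \<le> Gr \<sigma> x" using Gr_anti assms x0 by auto
  hence 1: "0 \<le> x * (Gr \<sigma> x - Gr \<sigma> (x+y))" using x0 by simp
  have "Gr \<sigma> (x+y) \<le> Gr \<sigma> (2*y)" using Gr_anti assms by auto
  hence 2: "y * (Gr \<sigma> y - Gr \<sigma> (2*y)) \<le> y * (Gr \<sigma> y - Gr \<sigma> (x+y))" using assms by (intro mult_left_mono) auto
  define P where "P = Gr \<sigma> y"
  define Q where "Q = Gr \<sigma> (2*y)"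
  have P1: "P \<ge> 1" unfolding P_def Gr_def by simp
  have Q1: "Q \<ge> 0" unfolding Q_def Gr_def by simp
  have QP: "Q \<le> P" unfolding P_def Q_def using Gr_anti assms by auto
  have P2: "P\<^sup>2 = 1 + y powr (-\<sigma>)" unfolding P_def Gr_def by (intro real_sqrt_pow2) simp
  have Q2: "Q\<^sup>2 = 1 + (2*y) powr (-\<sigma>)" unfolding Q_def Gr_def by (intro real_sqrt_pow2) simp
  have m: "(2*y) powr (-\<sigma>) = 2 powr (-\<sigma>) * y powr (-\<sigma>)" using assms by (simp add: powr_mult)
  have d: "(P - Q) * (P + Q) = y powr (-\<sigma>) * (1 - 2 powr (-\<sigma>))"
  proof -
    have "(P - Q) * (P + Q) = P\<^sup>2 - Q\<^sup>2" by (simp add: power2_eq_square algebra_simps)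
    also have "\<dots> = y powr (-\<sigma>) * (1 - 2 powr (-\<sigma>))" unfolding P2 Q2 m by (simp add: algebra_simps)
    finally show ?thesis .
  qed
  have "(P - Q) * (P + Q) \<le> (P - Q) * (2 * P)" using QP by (intro mult_left_mono) auto
  hence "y powr (-\<sigma>) * (1 - 2 powr (-\<sigma>)) / (2 * P) \<le> P - Q" using d P1
    by (simp add: divide_le_eq mult.commute)
  hence "y * (y powr (-\<sigma>) * (1 - 2 powr (-\<sigma>)) / (2 * P)) \<le> y * (P - Q)" using assms by (intro mult_left_mono) auto
  thus ?thesis using e 1 2 unfolding P_def Q_def by simp
qed
lemma cos_vangle:
  fixes x y :: "real^3"
  assumes "x \<noteq> 0" "y \<noteq> 0"
  shows "cos (vangle x y) = inner x y / (norm x * norm y)"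
proof -
  have p: "0 < norm x * norm y" using assms by simp
  have "\<bar>inner x y\<bar> \<le> norm x * norm y" by (rule Cauchy_Schwarz_ineq2)
  hence "\<bar>inner x y / (norm x * norm y)\<bar> \<le> 1" using p by (simp add: abs_divide divide_le_eq_1)
  hence "-1 \<le> inner x y / (norm x * norm y)" "inner x y / (norm x * norm y) \<le> 1" by linarith+
  thus ?thesis unfolding vangle_def by (rule cos_arccos)
qed

lemma angles:
  fixes a b c :: "real^3"
  assumes ab: "a = b + c" and c0: "c \<noteq> 0" and ca: "norm c \<le> norm a" and cb: "norm c \<le> norm b"
  shows "norm c * (1 - cos (vangle a c)) + norm c * (1 - cos (vangle a b)) \<le> 5/2 * (norm b + norm c - norm a)"
proof -
  define na nb nc where "na = norm a" and "nb = norm b" and "nc = norm c"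
  have nc0: "0 < nc" using c0 nc_def by simp
  have na0: "0 < na" using nc0 ca na_def nc_def by linarith
  have nb0: "0 < nb" using nc0 cb nb_def nc_def by linarith
  have a0: "a \<noteq> 0" using na0 na_def by auto
  have b0: "b \<noteq> 0" using nb0 nb_def by auto
  have t1: "na \<le> nb + nc" unfolding na_def nb_def nc_def ab by (rule norm_triangle_ineq)
  have bac: "b = a - c" using ab by simp
  have t2: "nb \<le> na + nc" unfolding na_def nb_def nc_def bac by (rule norm_triangle_ineq4)
  define D where "D = nb + nc - na"
  have D0: "0 \<le> D" using t1 D_def by simp
  have i1: "nb\<^sup>2 = na\<^sup>2 + nc\<^sup>2 - 2 * inner a c"
    unfolding na_def nb_def nc_def bac by (simp add: power2_norm_eq_inner inner_diff algebra_simps inner_commute)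
  have i2: "nc\<^sup>2 = na\<^sup>2 + nb\<^sup>2 - 2 * inner a b"
    unfolding na_def nb_def nc_def ab by (simp add: power2_norm_eq_inner inner_add algebra_simps inner_commute)
  have e1: "nc * (1 - cos (vangle a c)) = (na * nc - inner a c) / na"
    using cos_vangle[OF a0 c0] na0 nc0 unfolding na_def nc_def by (simp add: field_simps)
  have f1: "na * nc - inner a c = D * (nb + na - nc) / 2"
    using i1 unfolding D_def by (simp add: power2_eq_square algebra_simps)
  have "nb + na - nc \<le> 3 * na" using t2 ca na0 unfolding na_def nc_def by linarith
  hence "D * (nb + na - nc) \<le> D * (3 * na)" using D0 by (intro mult_left_mono) auto
  hence "(na * nc - inner a c) / na \<le> 3/2 * D" using f1 na0 by (simp add: divide_le_eq algebra_simps)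
  hence g1: "nc * (1 - cos (vangle a c)) \<le> 3/2 * D" using e1 by simp
  have e2: "nc * (1 - cos (vangle a b)) = nc * (na * nb - inner a b) / (na * nb)"
    using cos_vangle[OF a0 b0] na0 nb0 unfolding na_def nb_def by (simp add: field_simps)
  have f2: "na * nb - inner a b = D * (nc + na - nb) / 2"
    using i2 unfolding D_def by (simp add: power2_eq_square algebra_simps)
  have "D * (nc + na - nb) \<le> D * (2 * nc)" using D0 t1 by (intro mult_left_mono) auto
  hence h: "na * nb - inner a b \<le> D * nc" using f2 by simp
  have "nc * (na * nb - inner a b) \<le> nc * (D * nc)" using h nc0 by (intro mult_left_mono) auto
  also have "\<dots> = D * (nc * nc)" by simp
  also have "\<dots> \<le> D * (na * nb)" using D0 ca cb nc0 na_def nb_def nc_def by (intro mult_left_mono mult_mono) auto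
  finally have "nc * (na * nb - inner a b) / (na * nb) \<le> D" using na0 nb0 by (simp add: divide_le_eq)
  hence g2: "nc * (1 - cos (vangle a b)) \<le> D" using e2 by simp
  show ?thesis using g1 g2 unfolding D_def na_def nb_def nc_def by simp
qed
lemma Tbound:
  assumes s0: "0 < \<sigma>" "\<sigma> < 2" and y0: "0 < y" and ys: "y \<le> s"
  shows "y / (1 + (s*y) powr \<sigma>) * Gr \<sigma> y \<le> 2 * (y * y powr (-\<sigma>))"
    and "y < 1 \<Longrightarrow> y powr ((2-\<sigma>)/2) * Gr \<sigma> y \<le> 2 * (y * y powr (-\<sigma>))"
proof -
  have G0: "0 \<le> Gr \<sigma> y" unfolding Gr_def by simp
  have P0: "0 \<le> (s*y) powr \<sigma>" by simp
  have D1: "1 \<le> 1 + (s*y) powr \<sigma>" using P0 by linarith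
  have Dp: "0 < 1 + (s*y) powr \<sigma>" using P0 by linarith
  have "y * 1 \<le> y * (1 + (s*y) powr \<sigma>)" using y0 D1 by (intro mult_left_mono) auto
  hence T1y: "y / (1 + (s*y) powr \<sigma>) \<le> y" using Dp by (simp add: pos_divide_le_eq)
  from Dp have T1n: "0 \<le> y / (1 + (s*y) powr \<sigma>)" using y0 by (intro divide_nonneg_pos) auto
  have small: "y powr ((2-\<sigma>)/2) * Gr \<sigma> y \<le> 2 * (y * y powr (-\<sigma>))" and smallT: "y \<le> y powr ((2-\<sigma>)/2)" if y1: "y < 1"
  proof -
    have "y powr 0 \<le> y powr (-\<sigma>)" using y0 y1 s0 by (intro powr_mono') auto
    hence ge1: "1 \<le> y powr (-\<sigma>)" using y0 by simp
    have sq: "(y powr (-\<sigma>/2))\<^sup>2 = y powr (-\<sigma>)" using y0 by (simp add: powr_power)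
    have "1 + y powr (-\<sigma>) \<le> (2 * y powr (-\<sigma>/2))\<^sup>2" using ge1 sq by (simp add: power_mult_distrib)
    hence Gb: "Gr \<sigma> y \<le> 2 * y powr (-\<sigma>/2)" unfolding Gr_def by (intro real_le_lsqrt) auto
    have ex: "(2-\<sigma>)/2 + (-\<sigma>/2) = 1 + (-\<sigma>)" by (simp add: field_simps)
    have "y powr ((2-\<sigma>)/2 + (-\<sigma>/2)) = y powr (1 + (-\<sigma>))" by (simp only: ex)
    hence eq: "y powr ((2-\<sigma>)/2) * y powr (-\<sigma>/2) = y * y powr (-\<sigma>)" using y0 by (simp only: powr_add powr_one)
    have "y powr ((2-\<sigma>)/2) * Gr \<sigma> y \<le> y powr ((2-\<sigma>)/2) * (2 * y powr (-\<sigma>/2))"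
      using Gb by (intro mult_left_mono) auto
    thus "y powr ((2-\<sigma>)/2) * Gr \<sigma> y \<le> 2 * (y * y powr (-\<sigma>))" using eq by (simp add: algebra_simps)
    have "y powr 1 \<le> y powr ((2-\<sigma>)/2)" using y0 y1 s0 by (intro powr_mono') auto
    thus "y \<le> y powr ((2-\<sigma>)/2)" using y0 by simp
  qed
  show "y < 1 \<Longrightarrow> y powr ((2-\<sigma>)/2) * Gr \<sigma> y \<le> 2 * (y * y powr (-\<sigma>))" by (rule small)
  show "y / (1 + (s*y) powr \<sigma>) * Gr \<sigma> y \<le> 2 * (y * y powr (-\<sigma>))"
  proof (cases "y < 1")
    case True
    have "y / (1 + (s*y) powr \<sigma>) * Gr \<sigma> y \<le> y powr ((2-\<sigma>)/2) * Gr \<sigma> y"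
      using T1y smallT[OF True] G0 by (intro mult_right_mono) auto
    thus ?thesis using small[OF True] by linarith
  next
    case False
    hence y1: "1 \<le> y" by simp
    have "y powr (-\<sigma>) \<le> y powr 0" using y1 s0 by (intro powr_mono) auto
    hence le1: "y powr (-\<sigma>) \<le> 1" using y0 by simp
    have Gb: "Gr \<sigma> y \<le> 2" unfolding Gr_def using le1 by (intro real_le_lsqrt) auto
    have "y powr \<sigma> \<le> (s*y) powr \<sigma>" using y0 y1 ys s0
      by (intro powr_mono2) (auto intro: order_trans[of y "1*y"] mult_right_mono)
    moreover have "0 < y powr \<sigma>" using y0 by simp
    ultimately have "y / (1 + (s*y) powr \<sigma>) \<le> y / y powr \<sigma>" using y0 Dp
      by (intro divide_left_mono) (auto intro: mult_pos_pos)
    also have "\<dots> = y * y powr (-\<sigma>)" by (simp add: divide_powr_uminus)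
    finally have T: "y / (1 + (s*y) powr \<sigma>) \<le> y * y powr (-\<sigma>)" .
    have "y / (1 + (s*y) powr \<sigma>) * Gr \<sigma> y \<le> (y * y powr (-\<sigma>)) * 2"
      using T Gb T1n G0 by (intro mult_mono) auto
    thus ?thesis by simp
  qed
qed
theorem lemma4p1:
  fixes \<sigma> :: real
  assumes "0 < \<sigma>" and "\<sigma> < 2"
  shows "\<exists>C>0. \<forall>a b c :: real^3.
           a = b + c \<and> norm c \<le> min (norm a) (norm b) \<and> norm b \<ge> 1 \<longrightarrow>
             (\<bar>psym \<sigma> a - psym \<sigma> b - psym \<sigma> c\<bar> \<ge>
                C * (norm c / (1 + (norm a * norm c) powr \<sigma>)
                     + norm c * ((1 - cos (vangle a c)) + (1 - cos (vangle a b)))))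
             \<and> (norm c < 1 \<longrightarrow>
                \<bar>psym \<sigma> a - psym \<sigma> b - psym \<sigma> c\<bar> \<ge>
                  C * (norm c powr ((2 - \<sigma>) / 2) / sqrt (1 + norm b powr \<sigma>)))"
proof -
  define k where "k = 1 - 2 powr (-\<sigma>)"
  have k0: "0 < k" using powr_less_one[of 2 "-\<sigma>"] assms by (simp add: k_def)
  have k1: "k \<le> 1" unfolding k_def by simp
  have main: "(\<bar>psym \<sigma> a - psym \<sigma> b - psym \<sigma> c\<bar> \<ge>
                k/20 * (norm c / (1 + (norm a * norm c) powr \<sigma>)
                     + norm c * ((1 - cos (vangle a c)) + (1 - cos (vangle a b)))))
             \<and> (norm c < 1 \<longrightarrow>
                \<bar>psym \<sigma> a - psym \<sigma> b - psym \<sigma> c\<bar> \<ge>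
                  k/20 * (norm c powr ((2 - \<sigma>) / 2) / sqrt (1 + norm b powr \<sigma>)))"
    if H: "a = b + c" "norm c \<le> min (norm a) (norm b)" "norm b \<ge> 1" for a b c :: "real^3"
  proof (cases "c = 0")
    case True
    hence "norm c = 0" by simp
    thus ?thesis by simp
  next
    case False
    define x y s where "x = norm b" and "y = norm c" and "s = norm a"
    define L where "L = \<bar>psym \<sigma> a - psym \<sigma> b - psym \<sigma> c\<bar>"
    have y0: "0 < y" using False y_def by simp
    have ys: "y \<le> s" and yx: "y \<le> x" and x1: "1 \<le> x" using H unfolding x_def y_def s_def by auto
    have sxy: "s \<le> x + y" unfolding x_def y_def s_def H(1) by (rule norm_triangle_ineq)
    have s0: "0 \<le> s" using s_def by simp
    have "psym \<sigma> a = Fr \<sigma> s" "psym \<sigma> b = Fr \<sigma> x" "psym \<sigma> c = Fr \<sigma> y"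
      unfolding psym_def Fr_def x_def y_def s_def by auto
    hence Lge: "Fr \<sigma> x + Fr \<sigma> y - Fr \<sigma> s \<le> L" unfolding L_def by linarith
    define G where "G = Gr \<sigma> y"
    have G1: "1 \<le> G" unfolding G_def Gr_def by simp
    define W where "W = y * y powr (-\<sigma>)"
    have W0: "0 \<le> W" unfolding W_def using y0 by simp
    define Qv where "Qv = W * k / (2 * G)"
    have Qv0: "0 \<le> Qv" unfolding Qv_def using W0 k0 G1 by simp
    have E: "Qv \<le> Fr \<sigma> x + Fr \<sigma> y - Fr \<sigma> (x + y)"
      using Egap[OF assms(1) y0 yx] unfolding Qv_def W_def G_def k_def by (simp add: mult.assoc)
    define D where "D = x + y - s"
    have R: "D / 4 \<le> Fr \<sigma> (x + y) - Fr \<sigma> s"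
      unfolding D_def using Fr_diff[OF assms s0 sxy] x1 y0 by simp
    have D0: "0 \<le> D" using sxy D_def by simp
    have A: "norm c * (1 - cos (vangle a c)) + norm c * (1 - cos (vangle a b)) \<le> 5/2 * D"
      using angles[OF H(1) False] H(2) unfolding D_def x_def y_def s_def by simp
    define A' where "A' = norm c * ((1 - cos (vangle a c)) + (1 - cos (vangle a b)))"
    have "A' = norm c * (1 - cos (vangle a c)) + norm c * (1 - cos (vangle a b))"
      unfolding A'_def by (rule distrib_left)
    hence A': "A' \<le> 5/2 * D" using A by simp
    have kA: "k * A' \<le> 5/2 * D"
    proof -
      have "k * A' \<le> k * (5/2 * D)" using A' k0 by (intro mult_left_mono) auto
      also have "\<dots> \<le> 1 * (5/2 * D)" using k1 D0 by (intro mult_right_mono) auto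
      finally show ?thesis by simp
    qed
    have conv: "k * T \<le> 4 * Qv" if TG: "T * G \<le> 2 * W" for T
    proof -
      have "T \<le> 2 * W / G" using TG G1 by (simp add: pos_le_divide_eq)
      hence "k * T \<le> k * (2 * W / G)" using k0 by (intro mult_left_mono) auto
      also have "\<dots> = 4 * Qv" unfolding Qv_def using G1 by (simp add: field_simps)
      finally show ?thesis .
    qed
    define T1 where "T1 = y / (1 + (s*y) powr \<sigma>)"
    have kT1: "k * T1 \<le> 4 * Qv" unfolding T1_def
      by (rule conv) (use Tbound(1)[OF assms y0 ys] in \<open>simp add: G_def W_def\<close>)
    have part1: "k/20 * (T1 + A') \<le> L"
    proof -
      have "k/20 * (T1 + A') = (k * T1) / 20 + (k * A') / 20" by (simp add: field_simps)
      thus ?thesis using kT1 kA Lge E R Qv0 D0 by linarith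
    qed
    have part2: "k/20 * (y powr ((2 - \<sigma>) / 2) / sqrt (1 + x powr \<sigma>)) \<le> L" if y1: "y < 1"
    proof -
      define T2 where "T2 = y powr ((2 - \<sigma>) / 2)"
      have kT2: "k * T2 \<le> 4 * Qv" unfolding T2_def
        by (rule conv) (use Tbound(2)[OF assms y0 ys y1] in \<open>simp add: G_def W_def\<close>)
      have T20: "0 \<le> T2" unfolding T2_def by simp
      have sq: "1 \<le> sqrt (1 + x powr \<sigma>)" by simp
      have "T2 * 1 \<le> T2 * sqrt (1 + x powr \<sigma>)" using T20 sq by (intro mult_left_mono) auto
      moreover have "0 < sqrt (1 + x powr \<sigma>)" using sq by linarith
      ultimately have "T2 / sqrt (1 + x powr \<sigma>) \<le> T2" by (simp add: pos_divide_le_eq)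
      hence "k/20 * (T2 / sqrt (1 + x powr \<sigma>)) \<le> k/20 * T2" using k0 by (intro mult_left_mono) auto
      thus ?thesis using kT2 Lge E R Qv0 D0 unfolding T2_def by linarith
    qed
    show ?thesis
    proof (intro conjI impI)
      show "k/20 * (norm c / (1 + (norm a * norm c) powr \<sigma>)
                     + norm c * ((1 - cos (vangle a c)) + (1 - cos (vangle a b))))
            \<le> \<bar>psym \<sigma> a - psym \<sigma> b - psym \<sigma> c\<bar>"
        using part1 unfolding L_def T1_def A'_def x_def y_def s_def .
      assume "norm c < 1"
      hence "y < 1" using y_def by simp
      from part2[OF this] show "k/20 * (norm c powr ((2 - \<sigma>) / 2) / sqrt (1 + norm b powr \<sigma>))
            \<le> \<bar>psym \<sigma> a - psym \<sigma> b - psym \<sigma> c\<bar>"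
        unfolding L_def x_def y_def s_def .
    qed
  qed
  show ?thesis using k0 main by (intro exI[of _ "k/20"]) auto
qed

end
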